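(* Let $H$ be a homogeneous relation on a finite set $V$. Define $s:\mathcal P(V)\to\mathbb R$ by $s(X)=|\mathcal S_X|$ for nonempty $X\subseteq V$ and $s(\emptyset)=-|V|$. Then $s$ is submodular: for all $X,Y\subseteq V$, $s(X)+s(Y)\ge s(X\cup Y)+s(X\cap Y)$.
   Context: $V$ is a finite set and $\mathcal P(V)$ its power set. A reflectless triple is a triple $(x,y,z)\in V^3$ with $x\neq y$ and $x\neq z$, written $(x|yz)$. A homogeneous relation $H$ on $V$ is a set of reflectless triples (we write $H(s|xy)$ when $(s|xy)\in H$) such that for every $s\in V$ the binary relation $H_s=\{(x,y): H(s|xy)\}$ is an equivalence relation on $V\setminus\{s\}$. For $X\subseteq V$ and $z\in V\setminus X$, $z$ distinguishes (splits) $X$ if there exist $x,y\in X$ with not $H(z|xy)$. $\mathcal S_X$ denotes the set of all elements of $V\setminus X$ distinguishing $X$. *)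

theory Defs
  imports Main "HOL-Analysis.Analysis"
begin

text \<open>A reflectless triple (x|yz) over V: x, y, z in V with x \<noteq> y and x \<noteq> z.
  The triple (x|yz) is represented as (x, y, z).\<close>
definition reflectless :: "'a set \<Rightarrow> ('a \<times> 'a \<times> 'a) \<Rightarrow> bool" where
  "reflectless V t = (case t of (x, y, z) \<Rightarrow> x \<in> V \<and> y \<in> V \<and> z \<in> V \<and> x \<noteq> y \<and> x \<noteq> z)"

definition slice :: "('a \<times> 'a \<times> 'a) set \<Rightarrow> 'a \<Rightarrow> ('a \<times> 'a) set" where
  "slice H s = {(x, y). (s, x, y) \<in> H}"

definition homogeneous :: "'a set \<Rightarrow> ('a \<times> 'a \<times> 'a) set \<Rightarrow> bool" where
  "homogeneous V H = ((\<forall>t\<in>H. reflectless V t) \<and>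
     (\<forall>s\<in>V. equiv (V - {s}) (slice H s)))"

definition distinguishes :: "('a \<times> 'a \<times> 'a) set \<Rightarrow> 'a \<Rightarrow> 'a set \<Rightarrow> bool" where
  "distinguishes H z X = (\<exists>x\<in>X. \<exists>y\<in>X. (z, x, y) \<notin> H)"

definition splitters :: "'a set \<Rightarrow> ('a \<times> 'a \<times> 'a) set \<Rightarrow> 'a set \<Rightarrow> 'a set" where
  "splitters V H X = {z \<in> V - X. distinguishes H z X}"

definition sfun :: "'a set \<Rightarrow> ('a \<times> 'a \<times> 'a) set \<Rightarrow> 'a set \<Rightarrow> real" where
  "sfun V H X = (if X = {} then - real (card V) else real (card (splitters V H X)))"

end

theory Submission
  imports Defs
begin

lemma split_union:
  assumes hom: "homogeneous V H" and z: "z \<in> V" "z \<notin> X" "z \<notin> Y"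
    and XV: "X \<subseteq> V" "Y \<subseteq> V" and a: "a \<in> X" "a \<in> Y"
    and nX: "\<not> distinguishes H z X" and nY: "\<not> distinguishes H z Y"
  shows "\<not> distinguishes H z (X \<union> Y)"
proof -
  have eq: "equiv (V - {z}) (slice H z)" using hom z(1) unfolding homogeneous_def by blast
  hence sy: "sym (slice H z)" and tr: "trans (slice H z)" by (auto simp: equiv_def)
  have S: "\<And>x y. (z,x,y) \<in> H \<Longrightarrow> (z,y,x) \<in> H"
    using sy unfolding sym_def slice_def by auto
  have T: "\<And>x y w. (z,x,y) \<in> H \<Longrightarrow> (z,y,w) \<in> H \<Longrightarrow> (z,x,w) \<in> H"
    using tr unfolding trans_def slice_def by auto
  have hx: "\<And>x. x \<in> X \<union> Y \<Longrightarrow> (z,a,x) \<in> H"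
    using nX nY a unfolding distinguishes_def by blast
  show ?thesis unfolding distinguishes_def using hx S T by blast
qed

lemma distinguishes_mono:
  "distinguishes H z A \<Longrightarrow> A \<subseteq> B \<Longrightarrow> distinguishes H z B"
  unfolding distinguishes_def by blast

theorem mainTheorem6:
  fixes V :: "'a set" and H :: "('a \<times> 'a \<times> 'a) set"
  assumes "finite V" and "homogeneous V H"
  shows "\<forall>X Y. X \<subseteq> V \<longrightarrow> Y \<subseteq> V \<longrightarrow>
           sfun V H X + sfun V H Y \<ge> sfun V H (X \<union> Y) + sfun V H (X \<inter> Y)"
proof (intro allI impI)
  fix X Y assume XV: "X \<subseteq> V" and YV: "Y \<subseteq> V"
  have spV: "\<And>A. splitters V H A \<subseteq> V" unfolding splitters_def by auto
  have fin: "\<And>A. finite (splitters V H A)" using spV assms(1) finite_subset by blast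
  have cle: "\<And>A. card (splitters V H A) \<le> card V" using spV assms(1) card_mono by blast
  show "sfun V H X + sfun V H Y \<ge> sfun V H (X \<union> Y) + sfun V H (X \<inter> Y)"
  proof (cases "X = {} \<or> Y = {}")
    case True
    then show ?thesis unfolding sfun_def by auto
  next
    case ne: False
    show ?thesis
    proof (cases "X \<inter> Y = {}")
      case True
      have "real (card (splitters V H (X \<union> Y))) \<le> real (card V)" using cle by simp
      then show ?thesis using ne True unfolding sfun_def by auto
    next
      case False
      then obtain a where a: "a \<in> X" "a \<in> Y" by blast
      let ?U = "splitters V H (X \<union> Y)" and ?I = "splitters V H (X \<inter> Y)"
        and ?A = "splitters V H X" and ?B = "splitters V H Y"
      have s1: "?U \<union> ?I \<subseteq> ?A \<union> ?B"
      proof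
        fix z assume "z \<in> ?U \<union> ?I"
        then show "z \<in> ?A \<union> ?B"
        proof
          assume zU: "z \<in> ?U"
          then have "z \<in> V" "z \<notin> X" "z \<notin> Y" "distinguishes H z (X \<union> Y)"
            unfolding splitters_def by auto
          then show ?thesis using split_union[OF assms(2) _ _ _ XV YV a]
            unfolding splitters_def by blast
        next
          assume zI: "z \<in> ?I"
          then have "z \<in> V" "z \<notin> X \<inter> Y" "distinguishes H z (X \<inter> Y)"
            unfolding splitters_def by auto
          then show ?thesis using distinguishes_mono[of H z "X \<inter> Y" X]
              distinguishes_mono[of H z "X \<inter> Y" Y]
            unfolding splitters_def by blast
        qed
      qed
      have s2: "?U \<inter> ?I \<subseteq> ?A \<inter> ?B"
        using distinguishes_mono[of H _ "X \<inter> Y" X] distinguishes_mono[of H _ "X \<inter> Y" Y]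
        unfolding splitters_def by blast
      have "card ?U + card ?I = card (?U \<union> ?I) + card (?U \<inter> ?I)"
        using card_Un_Int fin by metis
      also have "\<dots> \<le> card (?A \<union> ?B) + card (?A \<inter> ?B)"
        using s1 s2 fin card_mono by (meson add_mono finite_Int finite_UnI)
      also have "\<dots> = card ?A + card ?B" using card_Un_Int fin by metis
      finally have "card ?U + card ?I \<le> card ?A + card ?B" .
      hence "real (card ?U) + real (card ?I) \<le> real (card ?A) + real (card ?B)"
        by linarith
      then show ?thesis using ne False unfolding sfun_def by auto
    qed
  qed
qed

end
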